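(* Let $n\ge 3$ and $k\ge 1$ be integers, $a=nk+1$, $S=\{a\}\cup[2a-n,\,2a-2]$ and $G=\langle S\rangle$. For $i\in[0,k-1]$ let $A_{i,k}=\{(2i+1)a\}\cup[(2i+2)a-(i+1)n,\,(2i+2)a-2]$ and $B_{i,k}=\{(2i+2)a\}\cup[(2i+3)a-(i+1)n,\,(2i+3)a-2]$, and let $H=\{0\}\cup\bigcup_{i=0}^{k-1}(A_{i,k}\cup B_{i,k})\cup[2ka,\infty[$. Then: (1) $H$ is a numerical semigroup; (2) $G=H$; (3) $H$ is an $n$-permutation numerical semigroup.
   Context: $\mathbb{N}=\{0,1,2,\dots\}$. A numerical semigroup is a submonoid $G$ of $(\mathbb{N},+,0)$ with $\mathbb{N}\setminus G$ finite; $\langle S\rangle$ is the submonoid generated by $S$. Writing the elements of a numerical semigroup as $0=g_0<g_1<g_2<\cdots$, it is an $n$-permutation numerical semigroup if it is generated by $\{g_1,\dots,g_n\}$ and for every $m\in\mathbb{N}$ the tuple $(g_{mn+1}\bmod n,\dots,g_{mn+n}\bmod n)$ contains exactly one representative of each residue class of $\mathbb{Z}/n\mathbb{Z}$. Notation: $[u,v]=\{x\in\mathbb{N}:u\le x\le v\}$, $[u,\infty[=\{x\in\mathbb{N}:x\ge u\}$. *)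

theory Defs
  imports Main "HOL-Library.Infinite_Set"
begin

definition submonoid :: "nat set \<Rightarrow> bool" where
  "submonoid G \<longleftrightarrow> 0 \<in> G \<and> (\<forall>x\<in>G. \<forall>y\<in>G. x + y \<in> G)"

definition numerical_semigroup :: "nat set \<Rightarrow> bool" where
  "numerical_semigroup G \<longleftrightarrow> submonoid G \<and> finite (UNIV - G)"

definition gen :: "nat set \<Rightarrow> nat set" where
  "gen S = \<Inter>{M. submonoid M \<and> S \<subseteq> M}"

text \<open>Elements g_0 < g_1 < ... of G, i.e. g_i = enumerate G i.\<close>
definition n_permutation_ns :: "nat \<Rightarrow> nat set \<Rightarrow> bool" where
  "n_permutation_ns n G \<longleftrightarrow> numerical_semigroup G
     \<and> G = gen (enumerate G ` {1..n})
     \<and> (\<forall>m::nat. bij_betw (\<lambda>j. enumerate G (m * n + j) mod n) {1..n} {0..<n})"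

definition Aset :: "nat \<Rightarrow> nat \<Rightarrow> nat \<Rightarrow> nat set" where
  "Aset n k i = (let a = n * k + 1 in
     {(2*i+1) * a} \<union> {(2*i+2) * a - (i+1) * n .. (2*i+2) * a - 2})"

definition Bset :: "nat \<Rightarrow> nat \<Rightarrow> nat \<Rightarrow> nat set" where
  "Bset n k i = (let a = n * k + 1 in
     {(2*i+2) * a} \<union> {(2*i+3) * a - (i+1) * n .. (2*i+3) * a - 2})"

definition Hset :: "nat \<Rightarrow> nat \<Rightarrow> nat set" where
  "Hset n k = {0} \<union> (\<Union>i\<in>{0..k-1}. Aset n k i \<union> Bset n k i) \<union> {2 * k * (n * k + 1)..}"

end

theory Submission
  imports Defs "HOL-Library.Infinite_Set"
begin

lemma div_last: "(j::nat) < 2*k \<Longrightarrow> 2*k \<le> j+1 \<Longrightarrow> (j+1+1) div 2 = k" by presburger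

lemma mod_inj: assumes "(C + t1) mod n = (C + t2) mod (n::nat)" "1 \<le> t1" "t1 \<le> n" "1 \<le> t2" "t2 \<le> n"
  shows "t1 = t2"
proof (rule ccontr)
  assume ne: "t1 \<noteq> t2"
  have X: False if uv: "u < v" "(C + u) mod n = (C + v) mod n" "1 \<le> u" "v \<le> n" for u v
  proof -
    have "n dvd v - u" using mod_eq_dvd_iff_nat[of "C+u" "C+v" n] uv(1,2) by simp
    then have "n \<le> v - u" using uv(1) by (intro dvd_imp_le) auto
    then show False using uv by simp
  qed
  show False
  proof (cases "t1 < t2")
    case True then show False using X[of t1 t2] assms by simp
  next
    case False then have "t2 < t1" using ne by simp
    then show False using X[of t2 t1] assms by simp
  qed
qed

lemma bij_mod: "bij_betw (\<lambda>t. (C + t) mod n) {1..n} {0..<(n::nat)}"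
proof (cases "n = 0")
  case True then show ?thesis by (simp add: bij_betw_def)
next
  case False
  have inj: "inj_on (\<lambda>t. (C + t) mod n) {1..n}"
  proof (rule inj_onI)
    fix x y assume "x \<in> {1..n}" "y \<in> {1..n}" "(C+x) mod n = (C+y) mod n"
    then show "x = y" using mod_inj[of C x n y] by simp
  qed
  have sub: "(\<lambda>t. (C + t) mod n) ` {1..n} \<subseteq> {0..<n}" using False by auto
  have "card ((\<lambda>t. (C + t) mod n) ` {1..n}) = card {0..<n}" using card_image[OF inj] by simp
  then have "(\<lambda>t. (C + t) mod n) ` {1..n} = {0..<n}" using sub by (intro card_subset_eq) auto
  then show ?thesis using inj by (simp add: bij_betw_def)
qed

lemma enum_next: assumes "infinite S" "enumerate S p = z" "y \<in> S" "z < y" "\<And>w. z < w \<Longrightarrow> w < y \<Longrightarrow> w \<notin> S"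
  shows "enumerate S (Suc p) = (y::nat)"
  unfolding enumerate_Suc''[OF assms(1)] assms(2)
proof (rule Least_equality)
  show "y \<in> S \<and> z < y" using assms by simp
  fix s assume "s \<in> S \<and> z < s" then show "y \<le> s" using assms(5) by (meson not_le)
qed

lemma enum_group: assumes "infinite S" "enumerate S p = h 0"
  "\<And>t. t < m \<Longrightarrow> h (Suc t) \<in> S \<and> h t < h (Suc t) \<and> (\<forall>w. h t < w \<and> w < h (Suc t) \<longrightarrow> w \<notin> S)"
  shows "t \<le> m \<Longrightarrow> enumerate S (p + t) = (h t::nat)"
proof (induction t)
  case 0 then show ?case using assms(2) by simp
next
  case (Suc t)
  then have "enumerate S (p + t) = h t" by simp
  then show ?case using enum_next[OF assms(1)] assms(3)[of t] Suc.prems by auto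
qed

locale L = fixes n k :: nat assumes n3: "3 \<le> n" and k1: "1 \<le> k"
begin

definition a :: nat where "a = n*k+1"
definition c :: "nat \<Rightarrow> nat" where "c q = (q+1) div 2"
definition hp :: "nat \<Rightarrow> nat \<Rightarrow> bool" where
  "hp q r \<longleftrightarrow> 2*k \<le> q \<or> (1 \<le> q \<and> (r = 0 \<or> (a - c q * n \<le> r \<and> r \<le> a - 2)))"
definition H' :: "nat set" where "H' = {x. x = 0 \<or> hp (x div a) (x mod a)}"

lemma a_gt: "k*n < a" unfolding a_def by simp
lemma a_pos: "0 < a" unfolding a_def by simp
lemma a_ge: "4 \<le> a"
proof -
  have "3*1 \<le> n*k" by (intro mult_le_mono n3 k1)
  then show ?thesis unfolding a_def by simp
qed

lemma cn_le: "c q \<le> k \<Longrightarrow> c q * n < a" using a_gt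
  by (metis le_less_trans mult_le_mono1 mult.commute)

lemma divmod: "r < a \<Longrightarrow> (q*a + r) div a = q \<and> (q*a+r) mod a = r"
  using a_pos by simp

lemma memI: "r < a \<Longrightarrow> hp q r \<Longrightarrow> q*a + r \<in> H'"
  unfolding H'_def using divmod by auto

lemma memD: "r < a \<Longrightarrow> q*a + r \<in> H' \<Longrightarrow> q*a+r = 0 \<or> hp q r"
  unfolding H'_def using divmod by auto

lemma mem_iff: "r < a \<Longrightarrow> q*a + r \<in> H' \<longleftrightarrow> q*a+r = 0 \<or> hp q r"
  unfolding H'_def using divmod by auto

lemma decomp: obtains q r where "x = q*a + r" "r < a"
  using a_pos by (metis div_mult_mod_eq mod_less_divisor mult.commute)


lemma Aset_a: "Aset n k i = {(2*i+1)*a} \<union> {(2*i+2)*a - (i+1)*n .. (2*i+2)*a - 2}"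
  unfolding Aset_def Let_def a_def by simp
lemma Bset_a: "Bset n k i = {(2*i+2)*a} \<union> {(2*i+3)*a - (i+1)*n .. (2*i+3)*a - 2}"
  unfolding Bset_def Let_def a_def by simp
lemma Hset_a: "Hset n k = {0} \<union> (\<Union>i\<in>{0..k-1}. Aset n k i \<union> Bset n k i) \<union> {2*k*a..}"
  unfolding Hset_def a_def by simp

lemma blockI: assumes "1 \<le> q" "c q \<le> k" "q*a + (a - c q * n) \<le> x" "x \<le> q*a + (a - 2)"
  shows "x \<in> H'"
proof -
  have cn: "c q * n < a" using cn_le assms(2) .
  define r where "r = x - q*a"
  have x: "x = q*a + r" using assms(3) unfolding r_def by simp
  have r: "r < a" "a - c q * n \<le> r" "r \<le> a - 2" using assms(3,4) a_ge unfolding r_def by auto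
  have "hp q r" unfolding hp_def using r assms(1) by auto
  then show ?thesis using memI[OF r(1)] x by simp
qed

lemma singI: "1 \<le> q \<Longrightarrow> q*a \<in> H'"
  using memI[of 0 q] a_pos unfolding hp_def by simp

lemma tailI: "2*k*a \<le> x \<Longrightarrow> x \<in> H'"
proof -
  assume "2*k*a \<le> x"
  obtain q r where x: "x = q*a + r" "r < a" using decomp .
  have "2*k \<le> q"
  proof (rule ccontr)
    assume "\<not> 2*k \<le> q"
    then have "Suc q \<le> 2*k" by simp
    then have "Suc q * a \<le> 2*k*a" by (rule mult_le_mono1)
    then show False using x \<open>2*k*a \<le> x\<close> by simp
  qed
  then show ?thesis using memI[OF x(2)] x unfolding hp_def by simp
qed

lemma c_odd: "c (2*i+1) = i+1" unfolding c_def by simp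
lemma c_even: "c (2*i+2) = i+1" unfolding c_def by simp

lemma Hset_sub: "Hset n k \<subseteq> H'"
proof
  fix x assume "x \<in> Hset n k"
  then consider "x = 0" | i where "i \<le> k-1" "x \<in> Aset n k i" | i where "i \<le> k-1" "x \<in> Bset n k i" | "2*k*a \<le> x"
    unfolding Hset_a by auto
  then show "x \<in> H'"
  proof cases
    case 1 then show ?thesis unfolding H'_def by simp
  next
    case (2 i)
    have ik: "i+1 \<le> k" using 2(1) k1 by simp
    have "(i+1)*n \<le> k*n" using ik by (rule mult_le_mono1)
    then have le: "(i+1)*n < a" using a_gt by simp
    have e1: "(2*i+2)*a - (i+1)*n = (2*i+1)*a + (a - (i+1) * n)" using le by (simp add: algebra_simps)
    have e2: "(2*i+2)*a - 2 = (2*i+1)*a + (a - 2)" using a_ge by (simp add: algebra_simps)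
    from 2(2) show ?thesis unfolding Aset_a
    proof
      assume "x \<in> {(2*i+1)*a}" then show ?thesis using singI[of "2*i+1"] by simp
    next
      assume "x \<in> {(2*i+2)*a - (i+1)*n .. (2*i+2)*a - 2}"
      then show ?thesis using blockI[of "2*i+1" x] ik unfolding e1 e2 c_odd by simp
    qed
  next
    case (3 i)
    have ik: "i+1 \<le> k" using 3(1) k1 by simp
    have "(i+1)*n \<le> k*n" using ik by (rule mult_le_mono1)
    then have le: "(i+1)*n < a" using a_gt by simp
    have e1: "(2*i+3)*a - (i+1)*n = (2*i+2)*a + (a - (i+1) * n)" using le by (simp add: algebra_simps)
    have e2: "(2*i+3)*a - 2 = (2*i+2)*a + (a - 2)" using a_ge by (simp add: algebra_simps)
    from 3(2) show ?thesis unfolding Bset_a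
    proof
      assume "x \<in> {(2*i+2)*a}" then show ?thesis using singI[of "2*i+2"] by simp
    next
      assume "x \<in> {(2*i+3)*a - (i+1)*n .. (2*i+3)*a - 2}"
      then show ?thesis using blockI[of "2*i+2" x] ik unfolding e1 e2 c_even by simp
    qed
  next
    case 4 then show ?thesis by (rule tailI)
  qed
qed


lemma sub_Hset: "H' \<subseteq> Hset n k"
proof
  fix x assume xH: "x \<in> H'"
  obtain q r where x: "x = q*a + r" "r < a" using decomp .
  have AH: "y \<in> Aset n k i \<Longrightarrow> i \<le> k-1 \<Longrightarrow> y \<in> Hset n k" for y i unfolding Hset_a by auto
  have BH: "y \<in> Bset n k i \<Longrightarrow> i \<le> k-1 \<Longrightarrow> y \<in> Hset n k" for y i unfolding Hset_a by auto
  from memD[OF x(2)] xH x have h: "x = 0 \<or> hp q r" by simp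
  show "x \<in> Hset n k"
  proof (cases "x = 0")
    case True then show ?thesis unfolding Hset_a by simp
  next
    case False
    then have h: "hp q r" using h by simp
    show ?thesis
    proof (cases "2*k \<le> q")
      case True
      then have "2*k*a \<le> q*a" by (rule mult_le_mono1)
      moreover have "q*a \<le> x" using x by simp
      ultimately have "2*k*a \<le> x" by (rule order.trans)
      then show ?thesis unfolding Hset_a by auto
    next
      case False
      then have q1: "1 \<le> q" and rr: "r = 0 \<or> (a - c q * n \<le> r \<and> r \<le> a - 2)" using h unfolding hp_def by auto
      obtain i where "q = 2*i+1 \<or> q = 2*i+2"
      proof (cases "odd q")
        case True then have "q = 2*(q div 2)+1" by presburger
        then show ?thesis using that[of "q div 2"] by blast
      next
        case False then have "q = 2*((q-2) div 2)+2" using q1 by presburger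
        then show ?thesis using that[of "(q-2) div 2"] by blast
      qed
      then show ?thesis
      proof
        assume q: "q = 2*i+1"
        have ik: "i+1 \<le> k" using q False by simp
        have "(i+1)*n \<le> k*n" using ik by (rule mult_le_mono1)
        then have le: "(i+1)*n < a" using a_gt by simp
        have e1: "(2*i+2)*a - (i+1)*n = (2*i+1)*a + (a - (i+1) * n)" using le by (simp add: algebra_simps)
        have e2: "(2*i+2)*a - 2 = (2*i+1)*a + (a - 2)" using a_ge by (simp add: algebra_simps)
        have "x \<in> Aset n k i" unfolding Aset_a e1 e2 using rr x c_odd q by auto
        then show ?thesis using AH ik by simp
      next
        assume q: "q = 2*i+2"
        have ik: "i+1 \<le> k" using q False by simp
        have "(i+1)*n \<le> k*n" using ik by (rule mult_le_mono1)
        then have le: "(i+1)*n < a" using a_gt by simp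
        have e1: "(2*i+3)*a - (i+1)*n = (2*i+2)*a + (a - (i+1) * n)" using le by (simp add: algebra_simps)
        have e2: "(2*i+3)*a - 2 = (2*i+2)*a + (a - 2)" using a_ge by (simp add: algebra_simps)
        have "x \<in> Bset n k i" unfolding Bset_a e1 e2 using rr x c_even q by auto
        then show ?thesis using BH ik by simp
      qed
    qed
  qed
qed

lemma Hset_eq: "Hset n k = H'" using Hset_sub sub_Hset by blast


lemma c_sum1: "(q1::nat) + q2 < 2*k \<Longrightarrow> (q1+1) div 2 + (q2+1) div 2 \<le> k" by presburger
lemma c_sum2: "((q1::nat)+1) div 2 + (q2+1) div 2 \<le> (q1+q2+1+1) div 2" by presburger

lemma c_mono: "q \<le> q' \<Longrightarrow> c q * n \<le> c q' * n"
  unfolding c_def by (intro mult_le_mono1 div_le_mono) simp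

lemma H'_add: assumes "x \<in> H'" "y \<in> H'" shows "x + y \<in> H'"
proof -
  obtain q1 r1 where x: "x = q1*a + r1" "r1 < a" using decomp .
  obtain q2 r2 where y: "y = q2*a + r2" "r2 < a" using decomp .
  show ?thesis
  proof (cases "x = 0 \<or> y = 0")
    case True then show ?thesis using assms by auto
  next
    case False
    then have h1: "hp q1 r1" and h2: "hp q2 r2" using memD[OF x(2)] memD[OF y(2)] assms x y by auto
    show ?thesis
    proof (cases "2*k \<le> q1 + q2")
      case True
      then have "2*k*a \<le> (q1+q2)*a" by (rule mult_le_mono1)
      moreover have "(q1+q2)*a \<le> x + y" using x y by (simp add: algebra_simps)
      ultimately show ?thesis by (intro tailI) (rule order.trans)
    next
      case False
      then have q1: "1 \<le> q1" "\<not> 2*k \<le> q1" and q2: "1 \<le> q2" "\<not> 2*k \<le> q2"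
        and rr1: "r1 = 0 \<or> (a - c q1 * n \<le> r1 \<and> r1 \<le> a - 2)"
        and rr2: "r2 = 0 \<or> (a - c q2 * n \<le> r2 \<and> r2 \<le> a - 2)"
        using h1 h2 unfolding hp_def by auto
      have ck: "c q1 + c q2 \<le> k" using False c_sum1 unfolding c_def by simp
      have ck2: "c q1 + c q2 \<le> c (q1+q2+1)" unfolding c_def by (rule c_sum2)
      have "(c q1 + c q2) * n \<le> k * n" using ck by (rule mult_le_mono1)
      then have s: "c q1 * n + c q2 * n < a" using a_gt by (simp add: add_mult_distrib)
      have s2: "c q1 * n + c q2 * n \<le> c (q1+q2+1) * n" using mult_le_mono1[OF ck2, of n] by (simp add: add_mult_distrib)
      have m1: "c q1 * n \<le> c (q1+q2) * n" "c q2 * n \<le> c (q1+q2) * n" by (rule c_mono, simp)+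
      have qq: "1 \<le> q1 + q2" using q1 by simp
      consider "r1 = 0" | "r2 = 0" | "r1 \<noteq> 0" "r2 \<noteq> 0" by blast
      then show ?thesis
      proof cases
        case 1
        have d: "a - c (q1+q2)*n \<le> a - c q2 * n" using m1(2) by (rule diff_le_mono2)
        have "r2 = 0 \<or> (a - c (q1+q2)*n \<le> r2 \<and> r2 \<le> a - 2)" using rr2 order.trans[OF d] by blast
        then have "hp (q1+q2) r2" unfolding hp_def using qq by blast
        moreover have "x + y = (q1+q2)*a + r2" using x y 1 by (simp add: algebra_simps)
        ultimately show ?thesis using memI[OF y(2)] by simp
      next
        case 2
        have d: "a - c (q1+q2)*n \<le> a - c q1 * n" using m1(1) by (rule diff_le_mono2)
        have "r1 = 0 \<or> (a - c (q1+q2)*n \<le> r1 \<and> r1 \<le> a - 2)" using rr1 order.trans[OF d] by blast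
        then have "hp (q1+q2) r1" unfolding hp_def using qq by blast
        moreover have "x + y = (q1+q2)*a + r1" using x y 2 by (simp add: algebra_simps)
        ultimately show ?thesis using memI[OF x(2)] by simp
      next
        case 3
        then have r1: "a - c q1 * n \<le> r1" "r1 \<le> a - 2" and r2: "a - c q2 * n \<le> r2" "r2 \<le> a - 2"
          using rr1 rr2 by auto
        define r where "r = r1 + r2 - a"
        have ra: "a \<le> r1 + r2" using r1 r2 s by linarith
        have xy: "x + y = (q1+q2+1)*a + r" using x y ra unfolding r_def by (simp add: algebra_simps)
        have rlt: "r < a" "r \<le> a - 2" using r1 r2 a_ge unfolding r_def by linarith+
        have rge: "a - c (q1+q2+1) * n \<le> r" using r1 r2 s s2 unfolding r_def by linarith
        have "hp (q1+q2+1) r" unfolding hp_def using rlt rge by auto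
        then show ?thesis unfolding xy by (rule memI[OF rlt(1)])
      qed
    qed
  qed
qed


definition Sg :: "nat set" where "Sg = {a} \<union> {2*a - n .. 2*a - 2}"

lemma odd_ex: "2 \<le> (q::nat) \<Longrightarrow> q div 2 < (q+1) div 2 \<Longrightarrow> \<exists>i. q = 2*i+1 \<and> 1 \<le> i" by presburger

lemma c_le_k: "q < 2*k \<Longrightarrow> c q \<le> k" unfolding c_def by simp

lemma qa_ge: "1 \<le> q \<Longrightarrow> a \<le> q*a + r"
proof -
  assume "1 \<le> q" then have "a \<le> q*a" by simp
  then show ?thesis by (rule trans_le_add1)
qed

lemma stepI: "s \<in> Sg \<Longrightarrow> s \<le> x \<Longrightarrow> x - s \<in> H' \<Longrightarrow> x \<in> Sg \<or> (\<exists>s\<in>Sg. s \<le> x \<and> x - s \<in> H')" by blast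

lemma step: assumes "x \<in> H'" "x \<noteq> 0" shows "x \<in> Sg \<or> (\<exists>s\<in>Sg. s \<le> x \<and> x - s \<in> H')"
proof -
  obtain q r where x: "x = q*a + r" and r: "r < a" using decomp .
  have h: "hp q r" using memD[OF r, of q] assms unfolding x by blast
  have aS: "a \<in> Sg" unfolding Sg_def by simp
  have S2: "2*a - t \<in> Sg" if "2 \<le> t" "t \<le> n" for t unfolding Sg_def using that by auto
  have "1*n \<le> k*n" using k1 by (rule mult_le_mono1)
  then have an: "n < a" using a_gt by linarith
  show ?thesis
  proof (cases "r = 0")
    case True
    then have q1: "1 \<le> q" using x assms by (cases q) auto
    show ?thesis
    proof (cases "q = 1")
      case True then show ?thesis using x \<open>r = 0\<close> aS by simp
    next
      case False
      then have e: "x - a = (q-1)*a" using x \<open>r=0\<close> q1 by (simp add: diff_mult_distrib)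
      have "(q-1)*a \<in> H'" using False q1 by (intro singI) simp
      then have "x - a \<in> H'" unfolding e .
      moreover have "a \<le> x" using x qa_ge[OF q1] by simp
      ultimately show ?thesis using aS stepI by blast
    qed
  next
    case r0: False
    show ?thesis
    proof (cases "2*k \<le> q")
      case True
      show ?thesis
      proof (cases "2*k+1 \<le> q \<or> r \<le> a - 2")
        case True
        have xa: "x - a = (q-1)*a + r" using x \<open>2*k \<le> q\<close> k1 by (simp add: diff_mult_distrib)
        have "hp (q-1) r"
        proof (cases "2*k+1 \<le> q")
          case True then show ?thesis unfolding hp_def by (intro disjI1) linarith
        next
          case False
          then have q: "q - 1 = 2*k-1" using \<open>2*k \<le> q\<close> by simp
          have "c (2*k-1) = k" unfolding c_def using k1 by simp
          moreover have "a - k*n = 1" using a_def by simp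
          ultimately show ?thesis unfolding hp_def q using r0 \<open>\<not>(2*k+1 \<le> q)\<close> True k1 by auto
        qed
        then have "x - a \<in> H'" unfolding xa by (rule memI[OF r])
        moreover have "a \<le> x" using x qa_ge[of q r] \<open>2*k \<le> q\<close> k1 by simp
        ultimately show ?thesis using aS stepI by blast
      next
        case False
        then have q: "q = 2*k" and ra: "r = a - 1" using \<open>2*k \<le> q\<close> r by auto
        have P: "2*a \<le> 2*k*a" using k1 by simp
        have m: "(2*k-1)*a = 2*k*a - a" by (simp add: diff_mult_distrib)
        have e: "x - (2*a - 2) = (2*k-1)*a + 1" unfolding x q ra m using P a_ge by linarith
        have "c (2*k-1) = k" unfolding c_def using k1 by simp
        moreover have "a - k*n = 1" using a_def by simp
        moreover have "1 \<le> 2*k-1" using k1 by simp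
        ultimately have "hp (2*k-1) 1" unfolding hp_def using a_ge by auto
        then have "x - (2*a - 2) \<in> H'" unfolding e using a_ge by (intro memI) auto
        moreover have "2*a - 2 \<le> x" using e by simp
        moreover have "2*a - 2 \<in> Sg" using S2[of 2] n3 by simp
        ultimately show ?thesis using stepI by blast
      qed
    next
      case False
      then have q1: "1 \<le> q" and rr: "a - c q * n \<le> r" "r \<le> a - 2" using h r0 unfolding hp_def by auto
      show ?thesis
      proof (cases "q = 1")
        case True
        then have "x \<in> Sg" unfolding Sg_def x using rr c_def by auto
        then show ?thesis by simp
      next
        case q2: False
        show ?thesis
        proof (cases "a - c (q-1) * n \<le> r")
          case True
          have xa: "x - a = (q-1)*a + r" using x q1 by (simp add: diff_mult_distrib)
          have "hp (q-1) r" unfolding hp_def using True rr r0 q1 q2 by auto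
          then have "x - a \<in> H'" unfolding xa by (rule memI[OF r])
          moreover have "a \<le> x" using x qa_ge[OF q1] by simp
          ultimately show ?thesis using aS stepI by blast
        next
          case cF: False
          have "c (q-1) * n < c q * n" using cF rr by linarith
          then have "c (q-1) < c q" by simp
          then obtain i where q: "q = 2*i+1" and i1: "1 \<le> i" using odd_ex[of q] q1 q2 unfolding c_def by auto
          have cq: "c q = i+1" "c (q-2) = i" "c (q-1) = i" unfolding c_def q by auto
          have ik: "i+1 \<le> k" using c_le_k[of q] False cq by simp
          have "(i+1)*n \<le> k*n" using ik by (rule mult_le_mono1)
          then have Nn: "i*n + n < a" using a_gt by simp
          have "1*n \<le> i*n" using i1 by (rule mult_le_mono1)
          then have N3: "3 \<le> i*n" using n3 by linarith
          have r1: "a - (i*n + n) \<le> r" "r < a - i*n" using rr cF cq by (simp_all add: add_mult_distrib)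
          define t where "t = max 2 (a - i*n - r)"
          have t: "2 \<le> t" "t \<le> n" using r1 Nn n3 unfolding t_def by auto
          have P: "2*a \<le> 2*i*a" using i1 by simp
          have m: "(2*i-1)*a = 2*i*a - a" by (simp add: diff_mult_distrib)
          have xx: "x = 2*i*a + a + r" unfolding x q by (simp add: algebra_simps)
          have e: "x - (2*a - t) = (2*i - 1)*a + (r + t)" unfolding xx m using t an P by linarith
          have rt: "a - i*n \<le> r + t" "r + t \<le> a - 2" using r1 Nn N3 unfolding t_def by auto
          have "hp (2*i-1) (r+t)" unfolding hp_def using rt cq i1 q by auto
          then have "x - (2*a - t) \<in> H'" unfolding e using rt a_ge by (intro memI) auto
          moreover have "2*a - t \<le> x" unfolding xx using P by linarith
          ultimately show ?thesis using S2[OF t] stepI by blast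
        qed
      qed
    qed
  qed
qed


lemma n_lt_a: "n < a"
proof -
  have "1*n \<le> k*n" using k1 by (rule mult_le_mono1)
  then show ?thesis using a_gt by linarith
qed

lemma H'_sub: "submonoid H'" unfolding submonoid_def using H'_add by (auto simp: H'_def)

lemma Sg_H': "Sg \<subseteq> H'"
proof
  fix x assume "x \<in> Sg"
  then consider "x = a" | "2*a - n \<le> x" "x \<le> 2*a - 2" unfolding Sg_def by auto
  then show "x \<in> H'"
  proof cases
    case 1 then show ?thesis using singI[of 1] by simp
  next
    case 2
    have c1: "c 1 = 1" unfolding c_def by simp
    show ?thesis using blockI[of 1 x] 2 c1 k1 n_lt_a a_ge by simp
  qed
qed

lemma Sg_pos: "s \<in> Sg \<Longrightarrow> 0 < s" unfolding Sg_def using n_lt_a a_ge by auto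

lemma gen_Sg: "gen Sg = H'"
proof
  show "gen Sg \<subseteq> H'" unfolding gen_def using H'_sub Sg_H' by blast
next
  have gs: "submonoid (gen Sg)" unfolding gen_def submonoid_def by blast
  have sg: "Sg \<subseteq> gen Sg" unfolding gen_def by blast
  show "H' \<subseteq> gen Sg"
  proof
    fix x assume "x \<in> H'"
    then show "x \<in> gen Sg"
    proof (induction x rule: less_induct)
      case (less x)
      show ?case
      proof (cases "x = 0")
        case True then show ?thesis using gs unfolding submonoid_def by simp
      next
        case False
        from step[OF less.prems False] show ?thesis
        proof
          assume "x \<in> Sg" then show ?thesis using sg by blast
        next
          assume "\<exists>s\<in>Sg. s \<le> x \<and> x - s \<in> H'"
          then obtain s where s: "s \<in> Sg" "s \<le> x" "x - s \<in> H'" by blast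
          have "x - s < x" using Sg_pos[OF s(1)] s(2) False by simp
          then have "x - s \<in> gen Sg" using less.IH s(3) by blast
          moreover have "s \<in> gen Sg" using sg s(1) by blast
          ultimately have "s + (x - s) \<in> gen Sg" using gs unfolding submonoid_def by blast
          then show ?thesis using s(2) by simp
        qed
      qed
    qed
  qed
qed


lemma c_le_k2: "q \<le> 2*k \<Longrightarrow> c q \<le> k" unfolding c_def by simp

definition Zp :: "nat \<Rightarrow> bool" where
  "Zp z \<longleftrightarrow> z = 0 \<or> (\<exists>j s. 1 \<le> j \<and> j \<le> 2*k \<and> s < c j \<and> z = (j+1)*a - 2 - s*n)
     \<or> (\<exists>r. z = (2*k+1)*a - 2 + r*n)"

definition gok :: "nat \<Rightarrow> (nat \<Rightarrow> nat) \<Rightarrow> nat \<Rightarrow> bool" where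
  "gok z h C \<longleftrightarrow> h 0 = z \<and> (\<forall>t<n. h (Suc t) \<in> H' \<and> h t < h (Suc t) \<and> (\<forall>w. h t < w \<and> w < h (Suc t) \<longrightarrow> w \<notin> H'))
     \<and> Zp (h n) \<and> (\<forall>t. 1 \<le> t \<and> t \<le> n \<longrightarrow> h t mod n = (C + t) mod n)"

lemma plain: assumes "\<And>t. 1 \<le> t \<Longrightarrow> t \<le> n \<Longrightarrow> z + t \<in> H'" "Zp (z+n)"
  shows "gok z (\<lambda>t. z+t) z"
proof -
  have A: "Suc (z+t) \<in> H'" if "t < n" for t using assms(1)[of "Suc t"] that by simp
  show ?thesis unfolding gok_def using A assms by auto
qed

definition hs :: "nat \<Rightarrow> nat \<Rightarrow> nat \<Rightarrow> nat" where
  "hs j z t = (if t = 0 then z else if t = 1 then (j+1)*a else (j+1)*a + (a - c (j+1) * n) + (t-2))"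

lemma start: assumes j: "j < 2*k" and z: "z < (j+1)*a" and gap: "\<And>w. z < w \<Longrightarrow> w < (j+1)*a \<Longrightarrow> w \<notin> H'"
  shows "gok z (hs j z) j"
proof -
  define c' where "c' = c (j+1)"
  have c1: "1 \<le> c'" unfolding c'_def c_def by simp
  have ck: "c' \<le> k" unfolding c'_def using j by (intro c_le_k2) simp
  have cn: "c' * n < a" unfolding c'_def using cn_le ck c'_def by simp
  have "1*n \<le> c'*n" using c1 by (rule mult_le_mono1)
  then have ncn: "n \<le> c' * n" by simp
  have B: "x \<in> H'" if "(j+1)*a + (a - c'*n) \<le> x" "x \<le> (j+1)*a + (a-2)" for x
    using blockI[of "j+1" x] ck that unfolding c'_def by simp
  have le2: "a - c'*n \<le> a - 2" using ncn n3 by linarith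
  have h0: "hs j z 0 = z" and h1: "hs j z 1 = (j+1)*a"
    and h2: "t \<ge> 2 \<Longrightarrow> hs j z t = (j+1)*a + (a - c' * n) + (t-2)" for t
    unfolding hs_def c'_def by auto
  have mem: "hs j z (Suc t) \<in> H' \<and> hs j z t < hs j z (Suc t) \<and> (\<forall>w. hs j z t < w \<and> w < hs j z (Suc t) \<longrightarrow> w \<notin> H')"
    if t: "t < n" for t
  proof -
    consider "t = 0" | "t = 1" | "t \<ge> 2" by linarith
    then show ?thesis
    proof cases
      case 1 then show ?thesis using h0 h1 z gap singI[of "j+1"] by auto
    next
      case 2
      have hh: "hs j z (Suc t) = (j+1)*a + (a - c'*n)" using h2[of "Suc t"] 2 by simp
      have in1: "(j+1)*a + (a - c'*n) \<in> H'" using le2 by (intro B) auto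
      have gp: "w \<notin> H'" if w: "(j+1)*a < w" "w < (j+1)*a + (a - c'*n)" for w
      proof
        assume wH: "w \<in> H'"
        define r where "r = w - (j+1)*a"
        have wr: "w = (j+1)*a + r" "r < a" "1 \<le> r" "r < a - c'*n" using w cn unfolding r_def by auto
        have "w \<noteq> 0" using w(1) by simp
        then have "hp (j+1) r" using memD[OF wr(2), of "j+1"] wH wr(1) by auto
        moreover have "a - k*n = 1" unfolding a_def by simp
        moreover have "2*k \<le> j+1 \<Longrightarrow> c' = k" using div_last[OF j] unfolding c'_def c_def by simp
        ultimately show False unfolding hp_def using wr c'_def by auto
      qed
      show ?thesis using hh in1 gp h1 2 cn by auto
    next
      case 3
      have hh: "hs j z (Suc t) = (j+1)*a + (a - c'*n) + (t - 1)" "hs j z t = (j+1)*a + (a - c'*n) + (t - 2)"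
        using h2[of "Suc t"] h2[of t] 3 by auto
      have "(j+1)*a + (a - c'*n) + (t - 1) \<le> (j+1)*a + (a-2)" using t ncn cn 3 by linarith
      then have "(j+1)*a + (a - c'*n) + (t - 1) \<in> H'" by (intro B) auto
      then show ?thesis using hh 3 by auto
    qed
  qed
  have Zn: "Zp (hs j z n)"
  proof -
    have e: "hs j z n = (j+1+1)*a - 2 - (c'-1)*n"
    proof -
      have a1: "(j+1+1)*a = (j+1)*a + a" by simp
      have a2: "(c'-1)*n = c'*n - n" by (simp add: diff_mult_distrib)
      have hn: "hs j z n = (j+1)*a + (a - c' * n) + (n-2)" using h2[of n] n3 by simp
      show ?thesis unfolding a1 a2 hn using ncn cn n3 by linarith
    qed
    show ?thesis unfolding Zp_def e using c1 j c'_def by (intro disjI2 disjI1 exI[of _ "j+1"] exI[of _ "c'-1"]) auto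
  qed
  have res: "hs j z t mod n = (j + t) mod n" if t: "1 \<le> t" "t \<le> n" for t
  proof (cases "t = 1")
    case True
    have "hs j z t = n * ((j+1)*k) + (j + t)" using h1 True unfolding a_def by (simp add: algebra_simps)
    then show ?thesis by simp
  next
    case False
    have kc: "c'*n \<le> k*n" using ck by (rule mult_le_mono1)
    have nk: "n*k = k*n" by simp
    have ac: "a - c'*n = (k - c')*n + 1" unfolding a_def diff_mult_distrib nk using kc by linarith
    have "hs j z t = n * ((j+1)*k + (k - c')) + (j + t)" using h2[of t] False t unfolding ac unfolding a_def
      by (simp add: algebra_simps)
    then show ?thesis by simp
  qed
  show ?thesis unfolding gok_def using h0 mem Zn res by auto
qed


lemma trans: assumes "Zp z" shows "\<exists>h C. gok z h C"
proof -
  from assms consider "z = 0" | j s where "1 \<le> j" "j \<le> 2*k" "s < c j" "z = (j+1)*a - 2 - s*n"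
    | r where "z = (2*k+1)*a - 2 + r*n" unfolding Zp_def by blast
  then show ?thesis
  proof cases
    case 1
    have "gok z (hs 0 z) 0"
    proof (rule start)
      show "0 < 2*k" using k1 by simp
      show "z < (0+1)*a" using 1 a_pos by simp
      fix w assume w: "z < w" "w < (0+1)*a"
      show "w \<notin> H'"
      proof
        assume "w \<in> H'"
        then have "w = 0 \<or> hp 0 w" using memD[of w 0] w by simp
        then show False using w 1 k1 unfolding hp_def by auto
      qed
    qed
    then show ?thesis by blast
  next
    case (2 j s)
    have cj: "c j \<le> k" using c_le_k2 2(2) .
    have cn: "c j * n < a" using cn_le[OF cj] .
    have "s*n + n \<le> c j * n" using mult_le_mono1[of "s+1" "c j" n] 2(3) by simp
    then have sn: "s*n + n < a" using cn by linarith
    have ja: "(j+1)*a = j*a + a" by simp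
    show ?thesis
    proof (cases "s = 0")
      case s0: True
      show ?thesis
      proof (cases "j = 2*k")
        case True
        have z: "z = (2*k+1)*a - 2 + 0*n" using 2(4) s0 True by simp
        have "gok z (\<lambda>t. z+t) z"
        proof (rule plain)
          fix t assume "1 \<le> t" "t \<le> n"
          have "2*k*a + 2 \<le> (2*k+1)*a" using a_ge by simp
          then show "z + t \<in> H'" using z by (intro tailI) linarith
        next
          show "Zp (z + n)" unfolding Zp_def using z a_ge
            by (intro disjI2 exI[of _ 1]) (simp add: algebra_simps)
        qed
        then show ?thesis by blast
      next
        case False
        have z: "z = (j+1)*a - 2" using 2(4) s0 by simp
        have "gok z (hs j z) j"
        proof (rule start)
          show "j < 2*k" using False 2(2) by simp
          show "z < (j+1)*a" using z a_ge by simp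
          fix w assume w: "z < w" "w < (j+1)*a"
          then have w1: "w = j*a + (a - 1)" using z a_ge ja by linarith
          show "w \<notin> H'"
          proof
            assume "w \<in> H'"
            moreover have "w \<noteq> 0" using w by simp
            ultimately have "hp j (a-1)" using memD[of "a-1" j] w1 a_pos by simp
            then show False using False 2(2) a_ge unfolding hp_def by auto
          qed
        qed
        then show ?thesis by blast
      qed
    next
      case False
      have "gok z (\<lambda>t. z+t) z"
      proof (rule plain)
        fix t assume t: "1 \<le> t" "t \<le> n"
        have "1*n \<le> s*n" using False by (intro mult_le_mono1) simp
        then show "z + t \<in> H'" using 2(1) cj 2(4) t sn a_ge \<open>s*n + n \<le> c j * n\<close> unfolding ja
          by (intro blockI[of j]) linarith+
      next
        have "1*n \<le> s*n" using False by (intro mult_le_mono1) simp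
        then have sn1: "n \<le> s*n" by linarith
        have e: "z + n = (j+1)*a - 2 - (s-1)*n" unfolding 2(4) ja diff_mult_distrib mult_1 using sn a_ge sn1 by linarith
        show "Zp (z + n)" unfolding Zp_def e using 2 by (intro disjI2 disjI1 exI[of _ j] exI[of _ "s-1"]) auto
      qed
      then show ?thesis by blast
    qed
  next
    case (3 r)
    have "gok z (\<lambda>t. z+t) z"
    proof (rule plain)
      fix t assume "1 \<le> t" "t \<le> n"
      have "2*k*a + 2 \<le> (2*k+1)*a" using a_ge by simp
      then show "z + t \<in> H'" using 3 by (intro tailI) linarith
    next
      show "Zp (z + n)" unfolding Zp_def using 3
        by (intro disjI2 exI[of _ "r+1"]) (simp add: algebra_simps)
    qed
    then show ?thesis by blast
  qed
qed


lemma H'_inf: "infinite H'"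
proof
  assume "finite H'"
  moreover have "{2*k*a..} \<subseteq> H'" using tailI by blast
  ultimately have "finite {2*k*a..}" by (rule finite_subset[rotated])
  then show False using infinite_Ici by blast
qed

lemma fin_compl: "finite (UNIV - H')"
proof -
  have "UNIV - H' \<subseteq> {..<2*k*a}" using tailI by (auto simp: not_less[symmetric])
  then show ?thesis by (rule finite_subset) simp
qed

lemma E0: "enumerate H' 0 = 0" unfolding enumerate_0 H'_def by (rule Least_equality) auto

lemma grp: assumes "Zp (enumerate H' p)" obtains h C where "gok (enumerate H' p) h C"
  "\<And>t. t \<le> n \<Longrightarrow> enumerate H' (p + t) = h t"
proof -
  obtain h C where g: "gok (enumerate H' p) h C" using trans[OF assms] by blast
  have "enumerate H' (p + t) = h t" if "t \<le> n" for t
    using enum_group[OF H'_inf, of p h n t] g that unfolding gok_def by auto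
  then show ?thesis using g that by blast
qed

lemma Zall: "Zp (enumerate H' (m*n))"
proof (induction m)
  case 0 then show ?case using E0 unfolding Zp_def by simp
next
  case (Suc m)
  obtain h C where g: "gok (enumerate H' (m*n)) h C" and e: "\<And>t. t \<le> n \<Longrightarrow> enumerate H' (m*n + t) = h t"
    using grp[OF Suc.IH] by blast
  have "enumerate H' (m*n + n) = h n" by (rule e) simp
  then have "Zp (enumerate H' (m*n + n))" using g unfolding gok_def by simp
  moreover have "Suc m * n = m*n + n" by simp
  ultimately show ?case by (simp only:)
qed

lemma perm: "bij_betw (\<lambda>j. enumerate H' (m * n + j) mod n) {1..n} {0..<n}"
proof -
  obtain h C where g: "gok (enumerate H' (m*n)) h C" and e: "\<And>t. t \<le> n \<Longrightarrow> enumerate H' (m*n + t) = h t"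
    using grp[OF Zall] by blast
  have "bij_betw (\<lambda>t. (C + t) mod n) {1..n} {0..<n}" by (rule bij_mod)
  moreover have "\<And>t. t \<in> {1..n} \<Longrightarrow> enumerate H' (m * n + t) mod n = (C + t) mod n"
    using e g unfolding gok_def by auto
  then have "bij_betw (\<lambda>j. enumerate H' (m * n + j) mod n) {1..n} {0..<n} = bij_betw (\<lambda>t. (C + t) mod n) {1..n} {0..<n}"
    by (intro bij_betw_cong) auto
  ultimately show ?thesis by simp
qed

lemma gens: "enumerate H' ` {1..n} = Sg"
proof -
  have Z0: "Zp (enumerate H' 0)" using E0 unfolding Zp_def by simp
  have g: "gok 0 (hs 0 0) 0"
  proof (rule start)
    show "0 < 2*k" using k1 by simp
    show "0 < (0+1)*a" using a_pos by simp
    fix w assume w: "0 < w" "w < (0+1)*a"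
    show "w \<notin> H'"
    proof
      assume "w \<in> H'"
      then have "w = 0 \<or> hp 0 w" using memD[of w 0] w by simp
      then show False using w k1 unfolding hp_def by auto
    qed
  qed
  have e: "enumerate H' t = hs 0 0 t" if "t \<le> n" for t
    using enum_group[OF H'_inf, of 0 "hs 0 0" n t] g that E0 unfolding gok_def by auto
  have c1: "c 1 = 1" unfolding c_def by simp
  have hv: "hs 0 0 t = (if t = 1 then a else 2*a - n + (t - 2))" if "1 \<le> t" for t
  proof (cases "t = 1")
    case True then show ?thesis unfolding hs_def by simp
  next
    case False
    have "hs 0 0 t = a + (a - c 1 * n) + (t - 2)" unfolding hs_def using that False by simp
    then show ?thesis unfolding c1 using that False n_lt_a by simp
  qed
  have "enumerate H' ` {1..n} = hs 0 0 ` {1..n}" using e by auto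
  also have "\<dots> = Sg"
  proof
    show "hs 0 0 ` {1..n} \<subseteq> Sg" unfolding Sg_def using hv n3 n_lt_a by auto
    show "Sg \<subseteq> hs 0 0 ` {1..n}"
    proof
      fix x assume "x \<in> Sg"
      then consider "x = a" | "2*a - n \<le> x" "x \<le> 2*a - 2" unfolding Sg_def by auto
      then show "x \<in> hs 0 0 ` {1..n}"
      proof cases
        case 1 then show ?thesis using hv[of 1] n3 by (intro image_eqI[of _ _ 1]) auto
      next
        case 2
        define t where "t = x - (2*a - n) + 2"
        have t: "2 \<le> t" "t \<le> n" using 2 n_lt_a n3 unfolding t_def by auto
        have "hs 0 0 t = x" using hv[of t] t 2 unfolding t_def by auto
        then show ?thesis using t by (intro image_eqI[of _ _ t]) auto
      qed
    qed
  qed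
  finally show ?thesis .
qed

end

theorem lemma5p2:
  fixes n k :: nat
  assumes "n \<ge> 3" and "k \<ge> 1"
  defines "a \<equiv> n * k + 1"
  defines "S \<equiv> {a} \<union> {2 * a - n .. 2 * a - 2}"
  shows "numerical_semigroup (Hset n k) \<and> gen S = Hset n k \<and> n_permutation_ns n (Hset n k)"
proof -
  have L: "L n k" using assms(1,2) by (simp add: L_def)
  have HH: "Hset n k = L.H' n k" using L.Hset_eq[OF L] .
  have SS: "S = L.Sg n k" unfolding S_def a_def by (simp add: L.Sg_def[OF L] L.a_def[OF L])
  have ns: "numerical_semigroup (Hset n k)"
    unfolding numerical_semigroup_def HH using L.H'_sub[OF L] L.fin_compl[OF L] by simp
  have g: "gen S = Hset n k" unfolding SS HH using L.gen_Sg[OF L] .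
  have p: "n_permutation_ns n (Hset n k)"
    unfolding n_permutation_ns_def using ns L.gens[OF L] L.gen_Sg[OF L] L.perm[OF L] unfolding HH by simp
  show ?thesis using ns g p by simp
qed

end
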